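(* If $f\in\mathrm{Bool}(X)$ is rigid, then $\mathcal{E}^W(f)=\mathcal{E}^S(f)$.
   Context: A boolean function on a finite set $X$ is a map $f:\mathcal{P}(X)\to\mathbb{Z}$ with $f(\emptyset)=0$; $\mathrm{Bool}(X)$ is their set; $f_{\mid Y}$ is the restriction to $\mathcal{P}(Y)$. For disjoint $X,Y$, $(f\star_1g)(A)=f(A\cap X)+g(A\cap Y)$ (associative, commutative, unit $1\in\mathrm{Bool}(\emptyset)$). For nonempty $X$, $f$ is indecomposable if $f=f'\star_1f''$ with $f'\in\mathrm{Bool}(X\setminus Y)$, $f''\in\mathrm{Bool}(Y)$ forces $Y\in\{\emptyset,X\}$. Each $f$ determines a unique equivalence $\sim_f^i$ with $f=\prod^{\star_1}_{Y\in X/\sim_f^i}f_{\mid Y}$ and each $f_{\mid Y}$ indecomposable; its classes are the indecomposable components of $f$ and $\mathrm{ic}(f)$ is their number. For an equivalence $\sim$: $\mathrm{cl}(\sim)=|X/{\sim}|$, $\varpi_\sim$ the canonical surjection, $f/{\sim}(A)=f(\varpi_\sim^{-1}(A))$, $(f\mid\sim)(A)=\sum_{Y\in X/\sim}f(A\cap Y)$. $\mathcal{E}^W(f)=\{\sim:\mathrm{ic}(f\mid\sim)=\mathrm{cl}(\sim)\}$ and $\mathcal{E}^S(f)=\{\sim\in\mathcal{E}^W(f):\mathrm{ic}(f/{\sim})=\mathrm{ic}(f)\}$. An indecomposable $f$ is rigid if for all disjoint $A,B\subseteq X$ with $f(A\sqcup B)=f(A)+f(B)$, one has $f(A'\sqcup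 B')=f(A')+f(B')$ for all $A'\subseteq A$, $B'\subseteq B$; a general $f$ is rigid if $f_{\mid Y}$ is rigid for each indecomposable component $Y$. *)

theory Defs
  imports Main
begin

text \<open>A boolean function on a finite set X is modelled as f :: 'a set => int,
  of which only the values on subsets of X matter, together with f {} = 0.\<close>

definition bool_fun :: "'a set \<Rightarrow> ('a set \<Rightarrow> int) \<Rightarrow> bool" where
  "bool_fun X f \<longleftrightarrow> finite X \<and> f {} = 0"

text \<open>f = f' *_1 f'' with f' in Bool(X - Y), f'' in Bool(Y).\<close>
definition decomposes :: "'a set \<Rightarrow> ('a set \<Rightarrow> int) \<Rightarrow> 'a set \<Rightarrow> bool" where
  "decomposes X f Y \<longleftrightarrow> Y \<subseteq> X \<and>
     (\<exists>f' f''. f' {} = 0 \<and> f'' {} = 0 \<and>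
        (\<forall>A. A \<subseteq> X \<longrightarrow> f A = f' (A \<inter> (X - Y)) + f'' (A \<inter> Y)))"

definition indecomposable :: "'a set \<Rightarrow> ('a set \<Rightarrow> int) \<Rightarrow> bool" where
  "indecomposable X f \<longleftrightarrow> X \<noteq> {} \<and>
     (\<forall>Y. decomposes X f Y \<longrightarrow> Y = {} \<or> Y = X)"

text \<open>The equivalence whose classes are the indecomposable components
  (f restricted to Y is just f on subsets of Y).\<close>
definition icomp_rel :: "'a set \<Rightarrow> ('a set \<Rightarrow> int) \<Rightarrow> 'a rel" where
  "icomp_rel X f = (THE R. equiv X R \<and>
      (\<forall>A. A \<subseteq> X \<longrightarrow> f A = (\<Sum>Y\<in>X // R. f (A \<inter> Y))) \<and>
      (\<forall>Y\<in>X // R. indecomposable Y f))"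

definition ic :: "'a set \<Rightarrow> ('a set \<Rightarrow> int) \<Rightarrow> nat" where
  "ic X f = card (X // icomp_rel X f)"

text \<open>f / ~ : boolean function on X/~, with preimage under canonical surjection.\<close>
definition quot_fun :: "'a set \<Rightarrow> ('a set \<Rightarrow> int) \<Rightarrow> 'a rel \<Rightarrow> ('a set set \<Rightarrow> int)" where
  "quot_fun X f R = (\<lambda>A. f {x\<in>X. R `` {x} \<in> A})"

definition split_fun :: "'a set \<Rightarrow> ('a set \<Rightarrow> int) \<Rightarrow> 'a rel \<Rightarrow> ('a set \<Rightarrow> int)" where
  "split_fun X f R = (\<lambda>A. \<Sum>Y\<in>X // R. f (A \<inter> Y))"

definition EW :: "'a set \<Rightarrow> ('a set \<Rightarrow> int) \<Rightarrow> 'a rel set" where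
  "EW X f = {R. equiv X R \<and> ic X (split_fun X f R) = card (X // R)}"

definition ES :: "'a set \<Rightarrow> ('a set \<Rightarrow> int) \<Rightarrow> 'a rel set" where
  "ES X f = {R \<in> EW X f. ic (X // R) (quot_fun X f R) = ic X f}"

definition rigid_indec :: "'a set \<Rightarrow> ('a set \<Rightarrow> int) \<Rightarrow> bool" where
  "rigid_indec X f \<longleftrightarrow>
     (\<forall>A B. A \<subseteq> X \<longrightarrow> B \<subseteq> X \<longrightarrow> A \<inter> B = {} \<longrightarrow> f (A \<union> B) = f A + f B \<longrightarrow>
        (\<forall>A' B'. A' \<subseteq> A \<longrightarrow> B' \<subseteq> B \<longrightarrow> f (A' \<union> B') = f A' + f B'))"

definition rigid :: "'a set \<Rightarrow> ('a set \<Rightarrow> int) \<Rightarrow> bool" where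
  "rigid X f \<longleftrightarrow> (\<forall>Y\<in>X // icomp_rel X f. rigid_indec Y f)"

end

theory Submission
  imports Defs "HOL-Library.Disjoint_Sets"
begin

definition sep :: "'a set \<Rightarrow> ('a set \<Rightarrow> int) \<Rightarrow> 'a set \<Rightarrow> bool" where
  "sep X g Y \<longleftrightarrow> Y \<subseteq> X \<and> (\<forall>A. A \<subseteq> X \<longrightarrow> g A = g (A \<inter> Y) + g (A - Y))"

lemma dec_iff:
  assumes "g {} = 0"
  shows "decomposes X g Y \<longleftrightarrow> sep X g Y"
proof
  assume "decomposes X g Y"
  then obtain f' f'' where Y: "Y \<subseteq> X" and z: "f' {} = 0" "f'' {} = 0"
    and e: "\<forall>A. A \<subseteq> X \<longrightarrow> g A = f' (A \<inter> (X - Y)) + f'' (A \<inter> Y)"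
    unfolding decomposes_def by blast
  show "sep X g Y" unfolding sep_def
  proof (intro conjI allI impI Y)
    fix A assume A: "A \<subseteq> X"
    have 1: "g (A \<inter> Y) = f'' (A \<inter> Y)"
      using e[rule_format, of "A \<inter> Y"] A z by (auto simp: Int_assoc Int_Diff)
    have 2: "g (A - Y) = f' (A \<inter> (X - Y))"
    proof -
      have "(A - Y) \<inter> (X - Y) = A \<inter> (X - Y)" by blast
      moreover have "(A - Y) \<inter> Y = {}" by blast
      ultimately show ?thesis using e[rule_format, of "A - Y"] A z by auto
    qed
    show "g A = g (A \<inter> Y) + g (A - Y)" using e A 1 2 by simp
  qed
next
  assume s: "sep X g Y"
  show "decomposes X g Y" unfolding decomposes_def
  proof (intro conjI exI)
    show "Y \<subseteq> X" using s by (simp add: sep_def)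
    show "g {} = 0" by fact
    show "g {} = 0" by fact
    show "\<forall>A. A \<subseteq> X \<longrightarrow> g A = g (A \<inter> (X - Y)) + g (A \<inter> Y)"
    proof (intro allI impI)
      fix A assume A: "A \<subseteq> X"
      have "A \<inter> (X - Y) = A - Y" using A by blast
      then show "g A = g (A \<inter> (X - Y)) + g (A \<inter> Y)" using s A by (simp add: sep_def)
    qed
  qed
qed

lemma indec_iff:
  assumes "g {} = 0"
  shows "indecomposable Y g \<longleftrightarrow> Y \<noteq> {} \<and> (\<forall>Z. sep Y g Z \<longrightarrow> Z = {} \<or> Z = Y)"
  using dec_iff[of g, OF assms] unfolding indecomposable_def by blast

lemma sep_int:
  assumes "sep X g Y" "sep X g Z"
  shows "sep X g (Y \<inter> Z)"
  unfolding sep_def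
proof (intro conjI allI impI)
  show "Y \<inter> Z \<subseteq> X" using assms by (auto simp: sep_def)
  fix A assume A: "A \<subseteq> X"
  have 1: "g A = g (A \<inter> Y) + g (A - Y)" using assms A by (simp add: sep_def)
  have 2: "g (A \<inter> Y) = g (A \<inter> Y \<inter> Z) + g (A \<inter> Y - Z)"
    using assms(2) A unfolding sep_def by (meson inf.coboundedI1)
  have 3: "g (A - Y \<inter> Z) = g ((A - Y \<inter> Z) \<inter> Y) + g ((A - Y \<inter> Z) - Y)"
    using assms A by (simp add: sep_def Diff_subset subset_trans[of _ A X])
  have "(A - Y \<inter> Z) \<inter> Y = A \<inter> Y - Z" "(A - Y \<inter> Z) - Y = A - Y" "A \<inter> Y \<inter> Z = A \<inter> (Y \<inter> Z)" by blast+
  then show "g A = g (A \<inter> (Y \<inter> Z)) + g (A - Y \<inter> Z)" using 1 2 3 by simp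
qed

lemma sep_sub:
  assumes "sep X g Z" "Z \<subseteq> Y" "Y \<subseteq> X"
  shows "sep Y g Z"
  using assms unfolding sep_def by blast

lemma sep_trans:
  assumes "sep X g Y" "sep Y g Z"
  shows "sep X g Z"
  unfolding sep_def
proof (intro conjI allI impI)
  show "Z \<subseteq> X" using assms by (auto simp: sep_def)
  fix A assume A: "A \<subseteq> X"
  have 1: "g A = g (A \<inter> Y) + g (A - Y)" using assms A by (simp add: sep_def)
  have 2: "g (A \<inter> Y) = g (A \<inter> Y \<inter> Z) + g (A \<inter> Y - Z)" using assms A by (simp add: sep_def)
  have 3: "g (A - Z) = g ((A - Z) \<inter> Y) + g ((A - Z) - Y)"
    using assms A by (simp add: sep_def Diff_subset subset_trans[of _ A X])
  have "(A - Z) \<inter> Y = A \<inter> Y - Z" "(A - Z) - Y = A - Y" "A \<inter> Y \<inter> Z = A \<inter> Z"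
    using assms by (auto simp: sep_def)
  then show "g A = g (A \<inter> Z) + g (A - Z)" using 1 2 3 by simp
qed

definition decomp :: "'a set \<Rightarrow> ('a set \<Rightarrow> int) \<Rightarrow> 'a set set \<Rightarrow> bool" where
  "decomp X g P \<longleftrightarrow> partition_on X P \<and> (\<forall>A. A \<subseteq> X \<longrightarrow> g A = (\<Sum>p\<in>P. g (A \<inter> p)))
     \<and> (\<forall>p\<in>P. indecomposable p g)"

lemma decompD1: "decomp X g P \<Longrightarrow> partition_on X P"
  unfolding decomp_def by blast
lemma decompD2: "decomp X g P \<Longrightarrow> A \<subseteq> X \<Longrightarrow> g A = (\<Sum>p\<in>P. g (A \<inter> p))"
  unfolding decomp_def by blast
lemma decompD3: "decomp X g P \<Longrightarrow> p \<in> P \<Longrightarrow> indecomposable p g"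
  unfolding decomp_def by blast
lemma decompD2': "decomp X g P \<Longrightarrow> \<forall>A. A \<subseteq> X \<longrightarrow> g A = (\<Sum>p\<in>P. g (A \<inter> p))"
  unfolding decomp_def by blast

lemma block_sep:
  assumes "finite X" "g {} = 0" "partition_on X P"
    and s: "\<forall>A. A \<subseteq> X \<longrightarrow> g A = (\<Sum>p\<in>P. g (A \<inter> p))" and p: "p \<in> P"
  shows "sep X g p"
  unfolding sep_def
proof (intro conjI allI impI)
  have fin: "finite P" using assms finite_elements by blast
  show "p \<subseteq> X" using assms(3) p by (auto simp: partition_on_def)
  fix A assume A: "A \<subseteq> X"
  have d: "\<And>q. q \<in> P \<Longrightarrow> q \<noteq> p \<Longrightarrow> p \<inter> q = {}"
    using assms(3) p by (auto simp: partition_on_def disjoint_def)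
  have "g A = g (A \<inter> p) + (\<Sum>q\<in>P - {p}. g (A \<inter> q))"
    using s A fin p by (simp add: sum.remove)
  moreover have "g (A - p) = g ((A - p) \<inter> p) + (\<Sum>q\<in>P - {p}. g ((A - p) \<inter> q))"
    using s A fin p by (simp add: sum.remove subset_trans[of _ A X])
  moreover have "(\<Sum>q\<in>P - {p}. g ((A - p) \<inter> q)) = (\<Sum>q\<in>P - {p}. g (A \<inter> q))"
  proof (rule sum.cong)
    fix q assume "q \<in> P - {p}"
    then have "(A - p) \<inter> q = A \<inter> q" using d by blast
    then show "g ((A - p) \<inter> q) = g (A \<inter> q)" by simp
  qed simp
  moreover have "(A - p) \<inter> p = {}" by blast
  ultimately show "g A = g (A \<inter> p) + g (A - p)" using assms(2) by simp
qed

lemma decomp_exists: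
  assumes "finite X" "g {} = 0"
  shows "\<exists>P. decomp X g P"
  using assms(1)
proof (induction X rule: finite_psubset_induct)
  case (psubset X)
  show ?case
  proof (cases "X = {}")
    case True
    then show ?thesis using assms(2)
      by (intro exI[of _ "{}"]) (auto simp: decomp_def partition_on_empty)
  next
    case ne: False
    show ?thesis
    proof (cases "indecomposable X g")
      case True
      then show ?thesis using ne
        by (intro exI[of _ "{X}"]) (auto simp: decomp_def partition_on_space Int_absorb2)
    next
      case False
      then obtain Y where Y: "sep X g Y" "Y \<noteq> {}" "Y \<noteq> X"
        using ne indec_iff[of g X, OF assms(2)] by blast
      have YX: "Y \<subset> X" using Y by (auto simp: sep_def)
      have YX2: "X - Y \<subset> X" using Y YX by blast
      obtain P1 where P1: "decomp Y g P1" using psubset.IH[OF YX] by blast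
      obtain P2 where P2: "decomp (X - Y) g P2" using psubset.IH[OF YX2] by blast
      have fY: "finite Y" "finite (X - Y)" using psubset.hyps YX by (auto intro: finite_subset)
      have f1: "finite P1" using decompD1[OF P1] fY finite_elements by blast
      have f2: "finite P2" using decompD1[OF P2] fY finite_elements by blast
      have s1: "\<And>p. p \<in> P1 \<Longrightarrow> p \<subseteq> Y" and s2: "\<And>p. p \<in> P2 \<Longrightarrow> p \<subseteq> X - Y"
        using decompD1[OF P1] decompD1[OF P2] by (auto simp: partition_on_def)
      have ne1: "{} \<notin> P1" and ne2: "{} \<notin> P2" using decompD1[OF P1] decompD1[OF P2] by (auto simp: partition_on_def)
      have disj: "P1 \<inter> P2 = {}"
      proof (rule ccontr)
        assume "P1 \<inter> P2 \<noteq> {}"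
        then obtain p where "p \<in> P1" "p \<in> P2" by blast
        then have "p \<subseteq> Y" "p \<subseteq> X - Y" using s1 s2 by presburger+
        then have "p = {}" by blast
        then show False using \<open>p \<in> P1\<close> ne1 by simp
      qed
      have part: "partition_on X (P1 \<union> P2)"
      proof (rule partition_onI)
        show "\<Union>(P1 \<union> P2) = X" using decompD1[OF P1] decompD1[OF P2] YX by (auto simp: partition_on_def)
        show "{} \<notin> P1 \<union> P2" using ne1 ne2 by blast
        fix p q assume pq: "p \<in> P1 \<union> P2" "q \<in> P1 \<union> P2" "p \<noteq> q"
        show "disjnt p q"
        proof (cases "p \<in> P1")
          case True
          show ?thesis
          proof (cases "q \<in> P1")
            case True
            then show ?thesis using \<open>p \<in> P1\<close> pq decompD1[OF P1] by (auto simp: partition_on_def pairwise_def)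
          next
            case False
            then show ?thesis using \<open>p \<in> P1\<close> pq s1 s2 by (auto simp: disjnt_def)
          qed
        next
          case False
          show ?thesis
          proof (cases "q \<in> P1")
            case True
            then show ?thesis using \<open>p \<notin> P1\<close> pq s1 s2 by (auto simp: disjnt_def)
          next
            case False
            then show ?thesis using \<open>p \<notin> P1\<close> pq decompD1[OF P2] by (auto simp: partition_on_def pairwise_def)
          qed
        qed
      qed
      have sum: "g A = (\<Sum>p\<in>P1 \<union> P2. g (A \<inter> p))" if A: "A \<subseteq> X" for A
      proof -
        have e0: "g A = g (A \<inter> Y) + g (A - Y)" using Y A by (simp add: sep_def)
        have e1: "g (A \<inter> Y) = (\<Sum>p\<in>P1. g (A \<inter> Y \<inter> p))" using decompD2[OF P1, of "A \<inter> Y"] A by simp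
        have e2: "(\<Sum>p\<in>P1. g (A \<inter> Y \<inter> p)) = (\<Sum>p\<in>P1. g (A \<inter> p))"
        proof (rule sum.cong)
          fix p assume "p \<in> P1" then have "A \<inter> Y \<inter> p = A \<inter> p" using s1 by blast
          then show "g (A \<inter> Y \<inter> p) = g (A \<inter> p)" by simp
        qed simp
        have e3: "g (A - Y) = (\<Sum>p\<in>P2. g ((A - Y) \<inter> p))" using decompD2[OF P2, of "A - Y"] A by blast
        have e4: "(\<Sum>p\<in>P2. g ((A - Y) \<inter> p)) = (\<Sum>p\<in>P2. g (A \<inter> p))"
        proof (rule sum.cong)
          fix p assume "p \<in> P2" then have "(A - Y) \<inter> p = A \<inter> p" using s2 by blast
          then show "g ((A - Y) \<inter> p) = g (A \<inter> p)" by simp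
        qed simp
        have "g A = (\<Sum>p\<in>P1. g (A \<inter> p)) + (\<Sum>p\<in>P2. g (A \<inter> p))" using e0 e1 e2 e3 e4 by simp
        then show ?thesis using sum.union_disjoint[OF f1 f2 disj, of "\<lambda>p. g (A \<inter> p)"] by simp
      qed
      show ?thesis
        unfolding decomp_def using part sum decompD3[OF P1] decompD3[OF P2] by blast
    qed
  qed
qed

lemma decomp_unique:
  assumes "finite X" "g {} = 0" "decomp X g P" "decomp X g Q"
  shows "P = Q"
proof -
  have key: "P \<subseteq> Q" if "decomp X g P" "decomp X g Q" for P Q
  proof
    fix p assume p: "p \<in> P"
    have sp: "sep X g p" using block_sep[of X g, OF assms(1,2) decompD1[OF that(1)] decompD2'[OF that(1)] p] .
    have ip: "indecomposable p g" using decompD3[OF that(1) p] .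
    then obtain x where x: "x \<in> p" by (auto simp: indecomposable_def)
    have "x \<in> X" using decompD1[OF that(1)] p x by (auto simp: partition_on_def)
    moreover have "X = \<Union>Q" using decompD1[OF that(2)] by (simp add: partition_on_def)
    ultimately obtain q where q: "q \<in> Q" "x \<in> q" by blast
    have sq: "sep X g q" using block_sep[of X g, OF assms(1,2) decompD1[OF that(2)] decompD2'[OF that(2)] q(1)] .
    have iq: "indecomposable q g" using decompD3[OF that(2) q(1)] .
    have pX: "p \<subseteq> X" "q \<subseteq> X" using sp sq by (auto simp: sep_def)
    have "sep p g (p \<inter> q)" using sep_sub[OF sep_int[OF sp sq]] pX by blast
    then have 1: "p \<inter> q = p" using ip x q indec_iff[of g p, OF assms(2)] by blast
    have "sep q g (p \<inter> q)" using sep_sub[OF sep_int[OF sp sq]] pX by blast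
    then have 2: "p \<inter> q = q" using iq x q indec_iff[of g q, OF assms(2)] by blast
    show "p \<in> Q" using 1 2 q by simp
  qed
  show ?thesis using key assms by blast
qed

lemma equiv_eq_rel_quotient:
  assumes eq: "equiv X R"
  shows "R = {(x, y). \<exists>p\<in>X // R. x \<in> p \<and> y \<in> p}"
proof (rule set_eqI, clarify)
  fix x y
  show "(x, y) \<in> R \<longleftrightarrow> (x, y) \<in> {(x, y). \<exists>p\<in>X // R. x \<in> p \<and> y \<in> p}"
  proof
    assume xy: "(x, y) \<in> R"
    have "x \<in> X" using xy equiv_type[OF eq] by blast
    then have "R `` {x} \<in> X // R" "x \<in> R `` {x}" using quotientI equiv_class_self[OF eq] by fast+
    moreover have "y \<in> R `` {x}" using xy by blast
    ultimately show "(x, y) \<in> {(x, y). \<exists>p\<in>X // R. x \<in> p \<and> y \<in> p}" by blast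
  next
    assume "(x, y) \<in> {(x, y). \<exists>p\<in>X // R. x \<in> p \<and> y \<in> p}"
    then obtain p where p: "p \<in> X // R" "x \<in> p" "y \<in> p" by blast
    then obtain z where z: "z \<in> X" "p = R `` {z}" by (auto elim: quotientE)
    have "(z, x) \<in> R" "(z, y) \<in> R" using p z by auto
    then have "(x, z) \<in> R" using eq unfolding equiv_def sym_def by blast
    then show "(x, y) \<in> R" using \<open>(z, y) \<in> R\<close> eq unfolding equiv_def trans_def by blast
  qed
qed

lemma equiv_eq_rel_quotient2:
  assumes "equiv X R" "X // R = P"
  shows "R = {(x, y). \<exists>p\<in>P. x \<in> p \<and> y \<in> p}"
  unfolding assms(2)[symmetric] by (rule equiv_eq_rel_quotient[OF assms(1)])

lemma icomp_char:
  assumes "finite X" "g {} = 0" "decomp X g P"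
  shows "X // icomp_rel X g = P"
proof -
  define R0 where "R0 = {(x, y). \<exists>p\<in>P. x \<in> p \<and> y \<in> p}"
  have part: "partition_on X P" using decompD1[OF assms(3)] .
  have eq0: "equiv X R0" unfolding R0_def by (rule equiv_partition_on[OF part])
  have q0: "X // R0 = P" unfolding R0_def by (rule partition_on_eq_quotient[OF part])
  have "icomp_rel X g = R0" unfolding icomp_rel_def
  proof (rule the_equality)
    show "equiv X R0 \<and> (\<forall>A. A \<subseteq> X \<longrightarrow> g A = (\<Sum>Y\<in>X // R0. g (A \<inter> Y))) \<and>
      (\<forall>Y\<in>X // R0. indecomposable Y g)" unfolding q0 using eq0 decompD2'[OF assms(3)] decompD3[OF assms(3)] by blast
  next
    fix R assume R: "equiv X R \<and> (\<forall>A. A \<subseteq> X \<longrightarrow> g A = (\<Sum>Y\<in>X // R. g (A \<inter> Y))) \<and>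
      (\<forall>Y\<in>X // R. indecomposable Y g)"
    then have "decomp X g (X // R)" unfolding decomp_def using partition_on_quotient by blast
    then have "X // R = P" using decomp_unique assms by blast
    then show "R = R0" unfolding R0_def using equiv_eq_rel_quotient2[of X R P] R by blast
  qed
  then show ?thesis using q0 by simp
qed

lemma icomp_decomp:
  assumes "finite X" "g {} = 0"
  shows "decomp X g (X // icomp_rel X g)"
  using decomp_exists[of X g, OF assms] icomp_char[of X g, OF assms] by metis

lemma sep_restrict:
  assumes "sep X g c" "Y \<subseteq> X"
  shows "sep Y g (Y \<inter> c)"
  unfolding sep_def
proof (intro conjI allI impI)
  show "Y \<inter> c \<subseteq> Y" by blast
  fix A assume A: "A \<subseteq> Y"
  then have "A \<inter> (Y \<inter> c) = A \<inter> c" "A - Y \<inter> c = A - c" by blast+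
  then show "g A = g (A \<inter> (Y \<inter> c)) + g (A - Y \<inter> c)" using assms A by (auto simp: sep_def)
qed

lemma sep_cong:
  assumes "\<And>B. B \<subseteq> Y \<Longrightarrow> h B = g B"
  shows "sep Y h Z \<longleftrightarrow> sep Y g Z"
proof -
  have "h A = h (A \<inter> Z) + h (A - Z) \<longleftrightarrow> g A = g (A \<inter> Z) + g (A - Z)" if A: "A \<subseteq> Y" for A
  proof -
    have "A \<inter> Z \<subseteq> Y" "A - Z \<subseteq> Y" using A by blast+
    then show ?thesis using assms A by simp
  qed
  then show ?thesis unfolding sep_def by blast
qed

lemma indec_cong:
  assumes "\<And>B. B \<subseteq> Y \<Longrightarrow> h B = g B" "g {} = 0"
  shows "indecomposable Y h \<longleftrightarrow> indecomposable Y g"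
proof -
  have "h {} = 0" using assms by simp
  then show ?thesis using indec_iff[of h Y] indec_iff[of g Y] assms sep_cong[of Y h g] by simp
qed

lemma decomp_block_inside:
  assumes "finite X" "g {} = 0" "decomp X g C" "c \<in> C" "p \<subseteq> X" "indecomposable p g" "p \<inter> c \<noteq> {}"
  shows "p \<subseteq> c"
proof -
  have "sep X g c" using block_sep[of X g C c] assms decompD1[OF assms(3)] decompD2'[OF assms(3)] by blast
  then have "sep p g (p \<inter> c)" using sep_restrict assms by blast
  then have "p \<inter> c = p" using assms indec_iff[of g p] by blast
  then show ?thesis by blast
qed

lemma EW_indec:
  assumes fin: "finite X" and f0: "f {} = 0" and eq: "equiv X R"
    and card: "ic X (split_fun X f R) = card (X // R)"
  shows "\<forall>p\<in>X // R. indecomposable p f"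
proof -
  define P where "P = X // R"
  define h where "h = split_fun X f R"
  have finP: "finite P" unfolding P_def using fin eq by (simp add: finite_quotient equiv_type)
  have partP: "partition_on X P" unfolding P_def using eq by (rule partition_on_quotient)
  have disjP: "\<And>p p'. p \<in> P \<Longrightarrow> p' \<in> P \<Longrightarrow> p \<noteq> p' \<Longrightarrow> p \<inter> p' = {}"
    using partP by (auto simp: partition_on_def disjoint_def)
  have h0: "h {} = 0" unfolding h_def split_fun_def using f0 by simp
  have hp: "h B = f B" if p: "p \<in> P" and B: "B \<subseteq> p" for p B
  proof -
    have "h B = f (B \<inter> p) + (\<Sum>p'\<in>P - {p}. f (B \<inter> p'))"
      unfolding h_def split_fun_def P_def[symmetric] using finP p by (simp add: sum.remove)
    moreover have "(\<Sum>p'\<in>P - {p}. f (B \<inter> p')) = 0"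
    proof (rule sum.neutral, rule ballI)
      fix p' assume "p' \<in> P - {p}"
      then have "B \<inter> p' = {}" using disjP[of p p'] p B by blast
      then show "f (B \<inter> p') = 0" using f0 by simp
    qed
    ultimately show ?thesis using B by (simp add: Int_absorb2)
  qed
  have hsum: "\<forall>A. A \<subseteq> X \<longrightarrow> h A = (\<Sum>p\<in>P. h (A \<inter> p))"
  proof (intro allI impI)
    fix A assume "A \<subseteq> X"
    have "(\<Sum>p\<in>P. h (A \<inter> p)) = (\<Sum>p\<in>P. f (A \<inter> p))"
      by (rule sum.cong) (auto intro: hp)
    then show "h A = (\<Sum>p\<in>P. h (A \<inter> p))" unfolding h_def split_fun_def P_def by simp
  qed
  have sepP: "sep X h p" if "p \<in> P" for p
    using block_sep[of X h P p] fin h0 partP hsum that by blast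
  define Q where "Q = X // icomp_rel X h"
  have dQ: "decomp X h Q" unfolding Q_def using icomp_decomp[of X h] fin h0 by blast
  have finQ: "finite Q" using decompD1[OF dQ] fin finite_elements by blast
  have cardQ: "card Q = card P" using card unfolding Q_def P_def h_def ic_def by simp
  have QX: "\<And>q. q \<in> Q \<Longrightarrow> q \<subseteq> X" and Qne: "\<And>q. q \<in> Q \<Longrightarrow> q \<noteq> {}"
    using decompD1[OF dQ] by (auto simp: partition_on_def)
  have disjQ: "\<And>q q'. q \<in> Q \<Longrightarrow> q' \<in> Q \<Longrightarrow> q \<noteq> q' \<Longrightarrow> q \<inter> q' = {}"
    using decompD1[OF dQ] by (auto simp: partition_on_def disjoint_def)
  have UQ: "\<Union>Q = X" using decompD1[OF dQ] by (auto simp: partition_on_def)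
  have inside: "q \<subseteq> p" if q: "q \<in> Q" and p: "p \<in> P" and ne: "q \<inter> p \<noteq> {}" for q p
  proof -
    have "sep q h (q \<inter> p)" using sep_restrict[OF sepP[OF p] QX[OF q]] .
    moreover have "indecomposable q h" using decompD3[OF dQ q] .
    ultimately have "q \<inter> p = q" using ne indec_iff[of h q] h0 by blast
    then show ?thesis by blast
  qed
  define \<phi> where "\<phi> q = R `` {SOME x. x \<in> q}" for q
  have phi: "\<phi> q \<in> P \<and> q \<subseteq> \<phi> q" if q: "q \<in> Q" for q
  proof -
    have x: "(SOME x. x \<in> q) \<in> q" using Qne[OF q] by (simp add: some_in_eq)
    then have xX: "(SOME x. x \<in> q) \<in> X" using QX q by blast
    have "\<phi> q \<in> P" unfolding \<phi>_def P_def using xX by (rule quotientI)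
    moreover have "(SOME x. x \<in> q) \<in> \<phi> q" unfolding \<phi>_def using xX eq equiv_class_self by fast
    ultimately show ?thesis using inside[OF q] x by blast
  qed
  have uniq: "\<phi> q = p" if "q \<in> Q" "p \<in> P" "x \<in> q" "x \<in> p" for q p x
    using phi[OF that(1)] disjP[of p "\<phi> q"] that by blast
  have img: "\<phi> ` Q = P"
  proof
    show "\<phi> ` Q \<subseteq> P" using phi by blast
    show "P \<subseteq> \<phi> ` Q"
    proof
      fix p assume p: "p \<in> P"
      have "p \<noteq> {}" using partP p by (auto simp: partition_on_def)
      then obtain x where x: "x \<in> p" by blast
      then have "x \<in> X" using partP p by (auto simp: partition_on_def)
      then obtain q where "q \<in> Q" "x \<in> q" using UQ by blast
      then show "p \<in> \<phi> ` Q" using uniq p x by blast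
    qed
  qed
  have inj: "inj_on \<phi> Q" using eq_card_imp_inj_on[OF finQ, of \<phi>] img cardQ by simp
  have PQ: "p \<in> Q" if p: "p \<in> P" for p
  proof -
    obtain q where q: "q \<in> Q" "\<phi> q = p" using img p by blast
    have "p \<subseteq> q"
    proof
      fix x assume x: "x \<in> p"
      then have "x \<in> X" using partP p by (auto simp: partition_on_def)
      then obtain q' where q': "q' \<in> Q" "x \<in> q'" using UQ by blast
      then have "\<phi> q' = p" using uniq p x by blast
      then have "q' = q" using inj q q' by (auto dest: inj_onD)
      then show "x \<in> q" using q' by simp
    qed
    moreover have "q \<subseteq> p" using phi q by blast
    ultimately show ?thesis using q by auto
  qed
  show ?thesis
  proof
    fix p assume p: "p \<in> X // R"
    then have "indecomposable p h" using PQ decompD3[OF dQ] unfolding P_def by blast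
    then show "indecomposable p f" using indec_cong[of p h f] hp p f0 unfolding P_def by blast
  qed
qed

lemma EW_ES_ic:
  assumes fin: "finite X" and f0: "f {} = 0" and eq: "equiv X R"
    and rig: "rigid X f" and ind: "\<forall>p\<in>X // R. indecomposable p f"
  shows "ic (X // R) (quot_fun X f R) = ic X f"
proof -
  define P where "P = X // R"
  define k where "k = quot_fun X f R"
  define C where "C = X // icomp_rel X f"
  have dC: "decomp X f C" unfolding C_def using icomp_decomp[of X f] fin f0 by blast
  have finP: "finite P" unfolding P_def using fin eq by (simp add: finite_quotient equiv_type)
  have partP: "partition_on X P" unfolding P_def using eq by (rule partition_on_quotient)
  have disjP: "\<And>p p'. p \<in> P \<Longrightarrow> p' \<in> P \<Longrightarrow> p \<noteq> p' \<Longrightarrow> p \<inter> p' = {}"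
    using partP by (auto simp: partition_on_def disjoint_def)
  have PX: "\<And>p. p \<in> P \<Longrightarrow> p \<subseteq> X" and Pne: "\<And>p. p \<in> P \<Longrightarrow> p \<noteq> {}"
    using partP by (auto simp: partition_on_def)
  have UP: "\<Union>P = X" using partP by (auto simp: partition_on_def)
  have finC: "finite C" using decompD1[OF dC] fin finite_elements by blast
  have CX: "\<And>c. c \<in> C \<Longrightarrow> c \<subseteq> X" and Cne: "\<And>c. c \<in> C \<Longrightarrow> c \<noteq> {}"
    using decompD1[OF dC] by (auto simp: partition_on_def)
  have disjC: "\<And>c c'. c \<in> C \<Longrightarrow> c' \<in> C \<Longrightarrow> c \<noteq> c' \<Longrightarrow> c \<inter> c' = {}"
    using decompD1[OF dC] by (auto simp: partition_on_def disjoint_def)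
  have UC: "\<Union>C = X" using decompD1[OF dC] by (auto simp: partition_on_def)
  have Cind: "\<And>c. c \<in> C \<Longrightarrow> indecomposable c f" using decompD3[OF dC] by blast
  have Crig: "\<And>c. c \<in> C \<Longrightarrow> rigid_indec c f" using rig unfolding rigid_def C_def by blast
  have fsum: "\<And>A. A \<subseteq> X \<Longrightarrow> f A = (\<Sum>c\<in>C. f (A \<inter> c))" using decompD2[OF dC] by blast
  have inside: "p \<subseteq> c" if "p \<in> P" "c \<in> C" "p \<inter> c \<noteq> {}" for p c
    using decomp_block_inside[of X f C c p] fin f0 dC that PX ind unfolding P_def by blast
  have kU: "k B = f (\<Union>B)" if B: "B \<subseteq> P" for B
  proof -
    have "{x \<in> X. R `` {x} \<in> B} = \<Union>B"
    proof safe
      fix x assume "x \<in> X" "R `` {x} \<in> B"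
      moreover have "x \<in> R `` {x}" using \<open>x \<in> X\<close> eq equiv_class_self by fast
      ultimately show "x \<in> \<Union>B" by blast
    next
      fix x p assume x: "x \<in> p" "p \<in> B"
      then have pP: "p \<in> X // R" using B P_def by blast
      then obtain y where y: "y \<in> X" "p = R `` {y}" by (auto elim: quotientE)
      then have "(y, x) \<in> R" using x by simp
      then have "R `` {x} = p" using y equiv_class_eq[OF eq] by simp
      then show "R `` {x} \<in> B" using x by simp
      show "x \<in> X" using x pP PX P_def by blast
    qed
    then show ?thesis unfolding k_def quot_fun_def by simp
  qed
  define d where "d c = {p \<in> P. p \<subseteq> c}" for c
  define D where "D = d ` C"
  have Ud: "\<Union>(d c) = c" if c: "c \<in> C" for c
  proof
    show "\<Union>(d c) \<subseteq> c" unfolding d_def by blast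
    show "c \<subseteq> \<Union>(d c)"
    proof
      fix x assume x: "x \<in> c"
      then obtain p where p: "p \<in> P" "x \<in> p" using UP CX c by blast
      then have "p \<subseteq> c" using inside c x by blast
      then show "x \<in> \<Union>(d c)" using p unfolding d_def by blast
    qed
  qed
  have dne: "d c \<noteq> {}" if "c \<in> C" for c using Ud[OF that] Cne[OF that] by auto
  have inj: "inj_on d C"
  proof
    fix c c' assume c: "c \<in> C" "c' \<in> C" "d c = d c'"
    have "c = \<Union>(d c)" using Ud c(1) by simp
    also have "\<dots> = \<Union>(d c')" using c(3) by simp
    also have "\<dots> = c'" using Ud c(2) by simp
    finally show "c = c'" .
  qed
  have partD: "partition_on P D"
  proof (rule partition_onI)
    show "\<Union>D = P"
    proof
      show "\<Union>D \<subseteq> P" unfolding D_def d_def by blast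
      show "P \<subseteq> \<Union>D"
      proof
        fix p assume p: "p \<in> P"
        then obtain x where x: "x \<in> p" using Pne by blast
        then obtain c where c: "c \<in> C" "x \<in> c" using PX p UC by blast
        then have "p \<subseteq> c" using inside p x by blast
        then show "p \<in> \<Union>D" unfolding D_def d_def using c p by blast
      qed
    qed
    show "{} \<notin> D" unfolding D_def using dne by auto
    fix a b assume ab: "a \<in> D" "b \<in> D" "a \<noteq> b"
    then obtain c c' where cc: "c \<in> C" "c' \<in> C" "a = d c" "b = d c'" "c \<noteq> c'"
      unfolding D_def by blast
    show "disjnt a b"
    proof (rule ccontr)
      assume "\<not> disjnt a b"
      then obtain p where "p \<in> d c" "p \<in> d c'" using cc by (auto simp: disjnt_def)
      then have "p \<subseteq> c \<inter> c'" "p \<in> P" unfolding d_def by auto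
      then show False using disjC[of c c'] cc Pne by blast
    qed
  qed
  have ksum: "k B = (\<Sum>a\<in>D. k (B \<inter> a))" if B: "B \<subseteq> P" for B
  proof -
    have "(\<Sum>a\<in>D. k (B \<inter> a)) = (\<Sum>c\<in>C. k (B \<inter> d c))"
      unfolding D_def using sum.reindex[OF inj] by simp
    also have "\<dots> = (\<Sum>c\<in>C. f (\<Union>B \<inter> c))"
    proof (rule sum.cong)
      fix c assume c: "c \<in> C"
      have "\<Union>(B \<inter> d c) = \<Union>B \<inter> c"
      proof
        show "\<Union>(B \<inter> d c) \<subseteq> \<Union>B \<inter> c" unfolding d_def by blast
        show "\<Union>B \<inter> c \<subseteq> \<Union>(B \<inter> d c)"
        proof
          fix x assume "x \<in> \<Union>B \<inter> c"
          then obtain p where p: "p \<in> B" "x \<in> p" "x \<in> c" by blast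
          then have "p \<subseteq> c" using inside B c by blast
          then show "x \<in> \<Union>(B \<inter> d c)" using p B unfolding d_def by blast
        qed
      qed
      moreover have "B \<inter> d c \<subseteq> P" using B by blast
      ultimately show "k (B \<inter> d c) = f (\<Union>B \<inter> c)" using kU[of "B \<inter> d c"] by simp
    qed simp
    also have "\<dots> = f (\<Union>B)"
    proof -
      have "\<Union>B \<subseteq> X" using B PX by blast
      then show ?thesis using fsum[of "\<Union>B"] by simp
    qed
    finally show ?thesis using kU B by simp
  qed
  have k0: "k {} = 0" using kU f0 by simp
  have Dind: "indecomposable a k" if a: "a \<in> D" for a
  proof -
    obtain c where c: "c \<in> C" and ac: "a = d c" using a unfolding D_def by blast
    have aP: "a \<subseteq> P" unfolding ac d_def by blast
    have "\<forall>S. sep a k S \<longrightarrow> S = {} \<or> S = a"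
    proof (intro allI impI)
      fix S assume S: "sep a k S"
      have Sa: "S \<subseteq> a" using S unfolding sep_def by blast
      define U where "U = \<Union>S"
      define V where "V = \<Union>(a - S)"
      have "U \<union> V = \<Union>a" unfolding U_def V_def using Sa by blast
      then have cUV: "c = U \<union> V" using Ud[OF c] ac by simp
      have UV: "U \<inter> V = {}"
      proof (rule ccontr)
        assume "U \<inter> V \<noteq> {}"
        then obtain x p p' where pp: "p \<in> S" "p' \<in> a - S" "x \<in> p" "x \<in> p'" unfolding U_def V_def by blast
        then have "p \<noteq> p'" "p \<in> P" "p' \<in> P" using aP Sa by auto
        then have "p \<inter> p' = {}" using disjP by blast
        then show False using pp by blast
      qed
      have "k a = k (a \<inter> S) + k (a - S)" using S unfolding sep_def by blast
      moreover have "k a = f c" using kU[OF aP] Ud[OF c] ac by simp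
      moreover have "k (a \<inter> S) = f U"
      proof -
        have "a \<inter> S = S" using Sa by blast
        moreover have "S \<subseteq> P" using Sa aP by blast
        ultimately show ?thesis using kU[of S] unfolding U_def by simp
      qed
      moreover have "k (a - S) = f V"
      proof -
        have "a - S \<subseteq> P" using aP by blast
        then show ?thesis using kU[of "a - S"] unfolding V_def by simp
      qed
      ultimately have fc: "f (U \<union> V) = f U + f V" using cUV by simp
      have Uc: "U \<subseteq> c" "V \<subseteq> c" using cUV by auto
      have add: "f (A' \<union> B') = f A' + f B'" if "A' \<subseteq> U" "B' \<subseteq> V" for A' B'
        using Crig[OF c, unfolded rigid_indec_def, rule_format, OF Uc(1) Uc(2) UV fc that] .
      have "sep c f U" unfolding sep_def
      proof (intro conjI allI impI)
        show "U \<subseteq> c" by fact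
        fix A assume A: "A \<subseteq> c"
        have e: "A = (A \<inter> U) \<union> (A - U)" by blast
        have "A - U \<subseteq> V" using A cUV by blast
        then have "f ((A \<inter> U) \<union> (A - U)) = f (A \<inter> U) + f (A - U)" using add[of "A \<inter> U" "A - U"] by blast
        then show "f A = f (A \<inter> U) + f (A - U)" using e by simp
      qed
      then have "U = {} \<or> U = c" using Cind[OF c] indec_iff[of f c] f0 by blast
      then show "S = {} \<or> S = a"
      proof
        assume "U = {}"
        have "S = {}"
        proof (rule ccontr)
          assume "S \<noteq> {}"
          then obtain p where p: "p \<in> S" by blast
          then have "p \<in> P" using Sa aP by blast
          then have "p \<noteq> {}" using Pne by blast
          moreover have "p \<subseteq> U" unfolding U_def using p by blast
          ultimately show False using \<open>U = {}\<close> by blast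
        qed
        then show ?thesis ..
      next
        assume Ueq: "U = c"
        have "a - S = {}"
        proof (rule ccontr)
          assume "a - S \<noteq> {}"
          then obtain p where p: "p \<in> a - S" by blast
          then obtain x where x: "x \<in> p" using aP Pne by blast
          then have "x \<in> V" using p unfolding V_def by blast
          then have "x \<in> U" using Ueq Uc by blast
          then show False using UV \<open>x \<in> V\<close> by blast
        qed
        then show ?thesis using Sa by blast
      qed
    qed
    moreover have "a \<noteq> {}" using dne c ac by simp
    ultimately show ?thesis using indec_iff[of k a] k0 by blast
  qed
  have dD: "decomp P k D" unfolding decomp_def using partD ksum Dind by blast
  have finP': "finite P" by fact
  have "ic P k = card D" unfolding ic_def using icomp_char[of P k D] finP k0 dD by simp
  also have "\<dots> = card C" unfolding D_def using card_image[OF inj] .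
  also have "\<dots> = ic X f" unfolding C_def ic_def ..
  finally show ?thesis unfolding P_def k_def .
qed

theorem lemma4p13:
  fixes X :: "'a set" and f :: "'a set \<Rightarrow> int"
  assumes "bool_fun X f"
    and "rigid X f"
  shows "EW X f = ES X f"
proof
  show "ES X f \<subseteq> EW X f" unfolding ES_def by blast
  show "EW X f \<subseteq> ES X f"
  proof
    fix R assume R: "R \<in> EW X f"
    have fin: "finite X" and f0: "f {} = 0" using assms(1) by (auto simp: bool_fun_def)
    have eq: "equiv X R" and c: "ic X (split_fun X f R) = card (X // R)" using R by (auto simp: EW_def)
    have "\<forall>p\<in>X // R. indecomposable p f" using EW_indec[OF fin f0 eq c] .
    then have "ic (X // R) (quot_fun X f R) = ic X f" using EW_ES_ic[OF fin f0 eq assms(2)] by blast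
    then show "R \<in> ES X f" using R unfolding ES_def by blast
  qed
qed

end
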